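(* Let $R$ be a commutative ring with identity, $\mathcal S$ an associative $R$-algebra with identity, $\mathcal M$ a $2$-torsion free, jointly prime bimodule over $\mathcal S$, $\delta$ a derivation on $\mathcal S$ and $f:\mathcal S\to\mathcal M$ a bimodule homomorphism over $\mathcal S$. If $D:\mathcal S\to\mathcal M$ is a Jordan $(\delta,f)$-derivation on $\mathcal M$ and $x,y\in\mathcal S$ satisfy $xy=0$, then $D((yx)z)=D(yx)z+f(yx)\delta(z)$ for all $z\in\mathcal S$.
   Context: A derivation on $\mathcal S$ is an additive map $\delta$ with $\delta(ab)=\delta(a)b+a\delta(b)$. An additive map $D:\mathcal S\to\mathcal M$ is a Jordan $(\delta,f)$-derivation if $D(x^2)=D(x)x+f(x)\delta(x)$ for all $x\in\mathcal S$. $\mathcal M$ is $2$-torsion free if $2m=0$ implies $m=0$. A proper bisubmodule $\mathcal K$ of $\mathcal M$ is jointly prime if for every left ideal $I$, right ideal $J$ of $\mathcal S$ and bisubmodule $\mathcal N$ of $\mathcal M$, $I\mathcal N J\subseteq\mathcal K$ implies $I\mathcal M J\subseteq\mathcal K$ or $\mathcal N\subseteq\mathcal K$; $\mathcal M$ is jointly prime if $0$ is a jointly prime bisubmodule. *)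

theory Defs
  imports Main
begin

definition is_algebra :: "('r::comm_ring_1 \<Rightarrow> 'a::ring_1 \<Rightarrow> 'a) \<Rightarrow> bool" where
  "is_algebra sc \<longleftrightarrow>
     (\<forall>r a b. sc r (a + b) = sc r a + sc r b) \<and>
     (\<forall>r s a. sc (r + s) a = sc r a + sc s a) \<and>
     (\<forall>r s a. sc (r * s) a = sc r (sc s a)) \<and>
     (\<forall>a. sc 1 a = a) \<and>
     (\<forall>r a b. sc r (a * b) = sc r a * b \<and> sc r (a * b) = a * sc r b)"

definition is_bimodule :: "('a::ring_1 \<Rightarrow> 'm::ab_group_add \<Rightarrow> 'm) \<Rightarrow> ('m \<Rightarrow> 'a \<Rightarrow> 'm) \<Rightarrow> bool" where
  "is_bimodule lm rm \<longleftrightarrow>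
     (\<forall>a m n. lm a (m + n) = lm a m + lm a n) \<and>
     (\<forall>a b m. lm (a + b) m = lm a m + lm b m) \<and>
     (\<forall>a b m. lm (a * b) m = lm a (lm b m)) \<and>
     (\<forall>m. lm 1 m = m) \<and>
     (\<forall>a m n. rm (m + n) a = rm m a + rm n a) \<and>
     (\<forall>a b m. rm m (a + b) = rm m a + rm m b) \<and>
     (\<forall>a b m. rm m (a * b) = rm (rm m a) b) \<and>
     (\<forall>m. rm m 1 = m) \<and>
     (\<forall>a b m. rm (lm a m) b = lm a (rm m b))"

definition two_torsion_free :: "'m::ab_group_add itself \<Rightarrow> bool" where
  "two_torsion_free _ \<longleftrightarrow> (\<forall>m::'m. m + m = 0 \<longrightarrow> m = 0)"

definition additive :: "('x::ab_group_add \<Rightarrow> 'y::ab_group_add) \<Rightarrow> bool" where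
  "additive g \<longleftrightarrow> (\<forall>a b. g (a + b) = g a + g b)"

definition is_derivation :: "('a::ring_1 \<Rightarrow> 'a) \<Rightarrow> bool" where
  "is_derivation d \<longleftrightarrow> additive d \<and> (\<forall>a b. d (a * b) = d a * b + a * d b)"

definition is_bimod_hom :: "('a::ring_1 \<Rightarrow> 'm::ab_group_add \<Rightarrow> 'm) \<Rightarrow> ('m \<Rightarrow> 'a \<Rightarrow> 'm)
    \<Rightarrow> ('a \<Rightarrow> 'm) \<Rightarrow> bool" where
  "is_bimod_hom lm rm f \<longleftrightarrow> additive f \<and>
     (\<forall>a x. f (a * x) = lm a (f x)) \<and> (\<forall>a x. f (x * a) = rm (f x) a)"

definition is_jordan_delta_f_derivation ::
  "('m::ab_group_add \<Rightarrow> 'a::ring_1 \<Rightarrow> 'm) \<Rightarrow> ('a \<Rightarrow> 'a) \<Rightarrow> ('a \<Rightarrow> 'm) \<Rightarrow> ('a \<Rightarrow> 'm) \<Rightarrow> bool" where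
  "is_jordan_delta_f_derivation rm d f D \<longleftrightarrow> additive D \<and>
     (\<forall>x. D (x * x) = rm (D x) x + rm (f x) (d x))"

definition is_add_subgroup :: "'x::ab_group_add set \<Rightarrow> bool" where
  "is_add_subgroup A \<longleftrightarrow> 0 \<in> A \<and> (\<forall>a\<in>A. \<forall>b\<in>A. a + b \<in> A \<and> - a \<in> A)"

definition left_ideal :: "'a::ring_1 set \<Rightarrow> bool" where
  "left_ideal I \<longleftrightarrow> is_add_subgroup I \<and> (\<forall>s a. a \<in> I \<longrightarrow> s * a \<in> I)"

definition right_ideal :: "'a::ring_1 set \<Rightarrow> bool" where
  "right_ideal J \<longleftrightarrow> is_add_subgroup J \<and> (\<forall>s a. a \<in> J \<longrightarrow> a * s \<in> J)"

definition bisubmodule :: "('a::ring_1 \<Rightarrow> 'm::ab_group_add \<Rightarrow> 'm) \<Rightarrow> ('m \<Rightarrow> 'a \<Rightarrow> 'm) \<Rightarrow> 'm set \<Rightarrow> bool" where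
  "bisubmodule lm rm N \<longleftrightarrow> is_add_subgroup N \<and>
     (\<forall>a n. n \<in> N \<longrightarrow> lm a n \<in> N) \<and> (\<forall>a n. n \<in> N \<longrightarrow> rm n a \<in> N)"

inductive_set triple_prod :: "('a::ring_1 \<Rightarrow> 'm::ab_group_add \<Rightarrow> 'm) \<Rightarrow> ('m \<Rightarrow> 'a \<Rightarrow> 'm)
    \<Rightarrow> 'a set \<Rightarrow> 'm set \<Rightarrow> 'a set \<Rightarrow> 'm set"
  for lm rm I N J where
    gen: "a \<in> I \<Longrightarrow> n \<in> N \<Longrightarrow> b \<in> J \<Longrightarrow> rm (lm a n) b \<in> triple_prod lm rm I N J"
  | zero: "0 \<in> triple_prod lm rm I N J"
  | add: "u \<in> triple_prod lm rm I N J \<Longrightarrow> v \<in> triple_prod lm rm I N J \<Longrightarrow> u + v \<in> triple_prod lm rm I N J"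
  | neg: "u \<in> triple_prod lm rm I N J \<Longrightarrow> - u \<in> triple_prod lm rm I N J"

definition jointly_prime_bisubmodule ::
  "('a::ring_1 \<Rightarrow> 'm::ab_group_add \<Rightarrow> 'm) \<Rightarrow> ('m \<Rightarrow> 'a \<Rightarrow> 'm) \<Rightarrow> 'm set \<Rightarrow> bool" where
  "jointly_prime_bisubmodule lm rm K \<longleftrightarrow> bisubmodule lm rm K \<and> K \<noteq> UNIV \<and>
     (\<forall>I J N. left_ideal I \<longrightarrow> right_ideal J \<longrightarrow> bisubmodule lm rm N \<longrightarrow>
        triple_prod lm rm I N J \<subseteq> K \<longrightarrow>
        triple_prod lm rm I UNIV J \<subseteq> K \<or> N \<subseteq> K)"

definition jointly_prime :: "('a::ring_1 \<Rightarrow> 'm::ab_group_add \<Rightarrow> 'm) \<Rightarrow> ('m \<Rightarrow> 'a \<Rightarrow> 'm) \<Rightarrow> bool" where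
  "jointly_prime lm rm \<longleftrightarrow> jointly_prime_bisubmodule lm rm {0}"

end

theory Submission
  imports Defs
begin

lemma jordan_core:
  fixes rm :: "'m::ab_group_add \<Rightarrow> 'a::ring_1 \<Rightarrow> 'm" and E :: "'a \<Rightarrow> 'm"
  assumes radd1: "\<And>m n a. rm (m + n) a = rm m a + rm n a"
    and radd2: "\<And>m a b. rm m (a + b) = rm m a + rm m b"
    and rmul: "\<And>m a b. rm m (a * b) = rm (rm m a) b"
    and rone: "\<And>m. rm m 1 = m"
    and Eadd: "\<And>a b. E (a + b) = E a + E b"
    and Esq: "\<And>a. E (a * a) = rm (E a) a"
    and tt: "\<And>m::'m. m + m = 0 \<Longrightarrow> m = 0"
    and xy: "x * y = 0"
  shows "E (y * x * z) = rm (E (y * x)) z"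
proof -
  have lin: "E (a * b + b * a) = rm (E a) b + rm (E b) a" for a b
  proof -
    define c where "c = a * b + b * a"
    have "E ((a + b) * (a + b)) = rm (E (a + b)) (a + b)" by (rule Esq)
    also have "(a + b) * (a + b) = a * a + b * b + c"
      by (simp add: algebra_simps c_def)
    finally have 1: "E (a * a + b * b + c) = rm (E (a + b)) (a + b)" .
    have 2: "E (a * a + b * b + c) = rm (E a) a + rm (E b) b + E c" by (simp only: Eadd Esq)
    have 3: "rm (E (a + b)) (a + b) = rm (E a) a + rm (E a) b + (rm (E b) a + rm (E b) b)"
      by (simp add: Eadd radd1 radd2 add_ac)
    from 1 2 3 have "E c = rm (E a) b + rm (E b) a" by (simp add: algebra_simps)
    then show ?thesis by (simp add: c_def)
  qed
  have aba: "E (a * b * a) = rm (E a) (b * a)" for a b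
  proof -
    define c where "c = a * b + b * a"
    define e where "e = a * b * a"
    define p where "p = a * a"
    have W: "a * c + c * a = (p * b + b * p) + (e + e)"
      by (simp add: algebra_simps c_def e_def p_def)
    have 1: "E (a * c + c * a) = rm (E a) c + rm (E c) a" by (rule lin)
    have h1b: "rm (E a) c + rm (E c) a = rm (E a) (a * b) + rm (E a) (b * a) + (rm (rm (E a) b) a + rm (rm (E b) a) a)"
      by (simp only: c_def lin radd1 radd2)
    have 2: "E (a * c + c * a) = rm (E a) (a * b) + rm (E b) (a * a) + (E e + E e)"
    proof -
      have "E (a * c + c * a) = E (p * b + b * p) + (E e + E e)"
        unfolding W by (simp only: Eadd[of "p * b + b * p" "e + e"] Eadd[of e e])
      also have "E (p * b + b * p) = rm (E p) b + rm (E b) p" by (rule lin)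
      also have "rm (E p) b = rm (E a) (a * b)" by (simp only: p_def Esq rmul)
      finally show ?thesis by (simp add: p_def)
    qed
    have 3: "rm (rm (E a) b) a = rm (E a) (b * a)" "rm (rm (E b) a) a = rm (E b) (a * a)"
      by (simp_all only: rmul)
    from 1 h1b 2 3 have "(E e - rm (E a) (b * a)) + (E e - rm (E a) (b * a)) = 0"
      by (simp add: algebra_simps)
    then have "E e - rm (E a) (b * a) = 0" by (rule tt)
    then show ?thesis by (simp add: e_def)
  qed
  have abc: "E (a * b * c + c * b * a) = rm (E a) (b * c) + rm (E c) (b * a)" for a b c
  proof -
    define g where "g = a * b * c + c * b * a"
    have "E ((a + c) * b * (a + c)) = rm (E (a + c)) (b * (a + c))" by (rule aba)
    also have "(a + c) * b * (a + c) = a * b * a + c * b * c + g"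
      by (simp add: algebra_simps g_def)
    finally have 1: "E (a * b * a + c * b * c + g) = rm (E (a + c)) (b * (a + c))" .
    have 2: "E (a * b * a + c * b * c + g) = rm (E a) (b * a) + rm (E c) (b * c) + E g"
      by (simp only: Eadd aba)
    have 3: "rm (E (a + c)) (b * (a + c)) = rm (E a) (b * a) + rm (E a) (b * c) + (rm (E c) (b * a) + rm (E c) (b * c))"
      by (simp add: Eadd radd1 radd2 distrib_left add_ac)
    from 1 2 3 have "E g = rm (E a) (b * c) + rm (E c) (b * a)" by (simp add: algebra_simps)
    then show ?thesis by (simp add: g_def)
  qed
  have E0: "E 0 = 0" using Eadd[of 0 0] by simp
  have key: "E (y * x * w) = rm (E y) (x * w)" for w
  proof -
    have "w * x * y = 0" using xy by (simp add: mult.assoc)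
    moreover have "rm m 0 = 0" for m using radd2[of m 0 0] by simp
    ultimately show ?thesis using abc[of y x w] by (simp add: E0 xy)
  qed
  have "E (y * x) = rm (E y) x" using key[of 1] by simp
  then show ?thesis using key[of z] by (simp add: rmul)
qed

theorem lemma3p13:
  fixes sc :: "'r::comm_ring_1 \<Rightarrow> 'a::ring_1 \<Rightarrow> 'a"
    and lm :: "'a \<Rightarrow> 'm::ab_group_add \<Rightarrow> 'm"
    and rm :: "'m \<Rightarrow> 'a \<Rightarrow> 'm"
    and d :: "'a \<Rightarrow> 'a"
    and f D :: "'a \<Rightarrow> 'm"
    and x y :: 'a
  assumes "is_algebra sc"
    and "is_bimodule lm rm"
    and "two_torsion_free TYPE('m)"
    and "jointly_prime lm rm"
    and "is_derivation d"
    and "is_bimod_hom lm rm f"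
    and "is_jordan_delta_f_derivation rm d f D"
    and "x * y = 0"
  shows "\<forall>z. D ((y * x) * z) = rm (D (y * x)) z + rm (f (y * x)) (d z)"
proof
  fix z
  have radd1: "\<And>m n a. rm (m + n) a = rm m a + rm n a"
    and radd2: "\<And>m a b. rm m (a + b) = rm m a + rm m b"
    and rmul: "\<And>m a b. rm m (a * b) = rm (rm m a) b"
    and rone: "\<And>m. rm m 1 = m"
    using assms(2) unfolding is_bimodule_def by blast+
  have tt: "\<And>m::'m. m + m = 0 \<Longrightarrow> m = 0" using assms(3) unfolding two_torsion_free_def by blast
  have dadd: "\<And>a b. d (a + b) = d a + d b" and dmul: "\<And>a b. d (a * b) = d a * b + a * d b"
    using assms(5) unfolding is_derivation_def additive_def by blast+
  have fr: "\<And>a x. f (x * a) = rm (f x) a" using assms(6) unfolding is_bimod_hom_def by blast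
  have Dadd: "\<And>a b. D (a + b) = D a + D b"
    and Dsq: "\<And>a. D (a * a) = rm (D a) a + rm (f a) (d a)"
    using assms(7) unfolding is_jordan_delta_f_derivation_def additive_def by blast+
  define m0 where "m0 = f 1"
  have fm: "f a = rm m0 a" for a unfolding m0_def by (metis fr mult_1_left)
  define E where "E a = D a - rm m0 (d a)" for a
  have rsub1: "rm (m - n) a = rm m a - rm n a" for m n a
    using radd1[of "m - n" n a] by (simp add: algebra_simps)
  have Eadd: "E (a + b) = E a + E b" for a b
  proof -
    have "E (a + b) = D a + D b - (rm m0 (d a) + rm m0 (d b))"
      by (simp only: E_def Dadd dadd radd2)
    then show ?thesis by (simp add: E_def)
  qed
  have Esq: "E (a * a) = rm (E a) a" for a
  proof -
    have "E (a * a) = rm (D a) a + rm (rm m0 a) (d a) - (rm m0 (d a * a) + rm m0 (a * d a))"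
      by (simp only: E_def Dsq fm dmul radd2)
    also have "\<dots> = rm (D a) a - rm (rm m0 (d a)) a"
      by (simp only: rmul[symmetric]) simp
    also have "\<dots> = rm (E a) a" by (simp only: E_def rsub1)
    finally show ?thesis .
  qed
  have core: "E (y * x * z) = rm (E (y * x)) z"
    by (rule jordan_core[where rm = rm and E = E, OF radd1 radd2 rmul rone Eadd Esq tt assms(8)])
  have c1: "D (y * x * z) = E (y * x * z) + rm m0 (d (y * x * z))" by (simp add: E_def)
  have c2: "d (y * x * z) = d (y * x) * z + y * x * d z" by (rule dmul)
  have c3: "E (y * x) = D (y * x) - rm m0 (d (y * x))" by (simp only: E_def)
  have "D (y * x * z) = rm (E (y * x)) z + (rm m0 (d (y * x) * z) + rm m0 (y * x * d z))"
    by (simp only: c1 core c2 radd2)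
  also have "\<dots> = rm (D (y * x)) z - rm (rm m0 (d (y * x))) z + (rm (rm m0 (d (y * x))) z + rm (rm m0 (y * x)) (d z))"
    by (simp only: c3 rsub1 rmul)
  also have "\<dots> = rm (D (y * x)) z + rm (f (y * x)) (d z)"
    by (simp add: fm)
  finally show "D ((y * x) * z) = rm (D (y * x)) z + rm (f (y * x)) (d z)" .
qed

end
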